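(* Let $X$ be a topological space that has a $\pi$-tree and let $C\subseteq X$ be at most countable. Then the subspace $X\setminus C$ has a $\pi$-tree.
   Context: A tree is a pair $\mathcal T=(Q,<)$ where $<$ is an irreflexive transitive relation on $Q$ such that for every $x\in Q$ the set $\{v\in Q:v<x\}$ is well-ordered by $<$. $\mathrm{sons}(x)=\{s: x<s$ and there is no $v$ with $x<v<s\}$. A branch is an inclusion-maximal set of pairwise comparable nodes. A foliage tree is a pair $\mathbf F=(\mathcal T,l)$ with $\mathcal T$ a tree (the skeleton) and $l$ a function on its nodes; $\mathbf F_x:=l(x)$ is the leaf at $x$. $\mathrm{fruit}_{\mathbf F}(A)=\bigcap_{x\in A}\mathbf F_x$; $\mathrm{shoot}_{\mathbf F}(z)=\{\bigcup_{s\in C'}\mathbf F_s: C'$ cofinite in $\mathrm{sons}(z)\}$; $\mathrm{scope}_{\mathbf F}(p)=\{y:p\in\mathbf F_y\}$; $\gamma\gg\delta$ means every nonempty $D\in\delta$ contains some nonempty $G\in\gamma$. A Baire foliage tree on a space $X$ is a foliage tree whose skeleton is isomorphic to $(\omega^{<\omega},\subsetneq)$, all of whose leaves are open in $X$, which is locally strict (for each non-maximal $x$, $\mathbf F_x$ is the disjoint union of $\mathbf F_s$, $s\in\mathrm{sons}(x)$), has strict branches (fruit of every branch is a singleton), and whose leaf at the least node is $X$. It grows into $X$ if for every $p\in X$ and every neighbourhood $U$ of $p$ there is $z\in\mathrm{scope}_{\mathbf F}(p)$ with $\mathrm{shoot}_{\mathbf F}(z)\gg\{U\}$. A $\pi$-tree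 on $X$ is a Baire foliage tree on $X$ that grows into $X$. *)

theory Defs
  imports "HOL-Analysis.Analysis" "HOL-Library.Sublist"
begin

definition is_tree :: "'n set \<Rightarrow> ('n \<Rightarrow> 'n \<Rightarrow> bool) \<Rightarrow> bool" where
  "is_tree Q lt \<longleftrightarrow>
     (\<forall>x\<in>Q. \<not> lt x x) \<and>
     (\<forall>x\<in>Q. \<forall>y\<in>Q. \<forall>z\<in>Q. lt x y \<and> lt y z \<longrightarrow> lt x z) \<and>
     (\<forall>x\<in>Q. let P = {v\<in>Q. lt v x} in
        (\<forall>u\<in>P. \<forall>v\<in>P. u \<noteq> v \<longrightarrow> lt u v \<or> lt v u) \<and>
        wf {(u, v). u \<in> P \<and> v \<in> P \<and> lt u v})"

definition sons :: "'n set \<Rightarrow> ('n \<Rightarrow> 'n \<Rightarrow> bool) \<Rightarrow> 'n \<Rightarrow> 'n set" where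
  "sons Q lt x = {s\<in>Q. lt x s \<and> \<not> (\<exists>v\<in>Q. lt x v \<and> lt v s)}"

definition branch :: "'n set \<Rightarrow> ('n \<Rightarrow> 'n \<Rightarrow> bool) \<Rightarrow> 'n set \<Rightarrow> bool" where
  "branch Q lt B \<longleftrightarrow>
     B \<subseteq> Q \<and> (\<forall>x\<in>B. \<forall>y\<in>B. x \<noteq> y \<longrightarrow> lt x y \<or> lt y x) \<and>
     (\<forall>B'. B \<subseteq> B' \<and> B' \<subseteq> Q \<and> (\<forall>x\<in>B'. \<forall>y\<in>B'. x \<noteq> y \<longrightarrow> lt x y \<or> lt y x)
        \<longrightarrow> B' = B)"

definition fruit :: "('n \<Rightarrow> 'a set) \<Rightarrow> 'n set \<Rightarrow> 'a set" where
  "fruit l A = (\<Inter>x\<in>A. l x)"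

definition shoot :: "'n set \<Rightarrow> ('n \<Rightarrow> 'n \<Rightarrow> bool) \<Rightarrow> ('n \<Rightarrow> 'a set) \<Rightarrow> 'n \<Rightarrow> 'a set set" where
  "shoot Q lt l z =
     {(\<Union>s\<in>C'. l s) | C'. C' \<subseteq> sons Q lt z \<and> finite (sons Q lt z - C')}"

definition scope :: "'n set \<Rightarrow> ('n \<Rightarrow> 'a set) \<Rightarrow> 'a \<Rightarrow> 'n set" where
  "scope Q l p = {y\<in>Q. p \<in> l y}"

definition refines :: "'a set set \<Rightarrow> 'a set set \<Rightarrow> bool" (infix "\<ggreater>" 50) where
  "\<gamma> \<ggreater> \<delta> \<longleftrightarrow> (\<forall>D\<in>\<delta>. D \<noteq> {} \<longrightarrow> (\<exists>G\<in>\<gamma>. G \<noteq> {} \<and> G \<subseteq> D))"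

definition baire_foliage_tree ::
  "'a topology \<Rightarrow> 'n set \<Rightarrow> ('n \<Rightarrow> 'n \<Rightarrow> bool) \<Rightarrow> ('n \<Rightarrow> 'a set) \<Rightarrow> bool" where
  "baire_foliage_tree X Q lt l \<longleftrightarrow>
     is_tree Q lt \<and>
     (\<exists>f :: nat list \<Rightarrow> 'n. bij_betw f UNIV Q \<and>
        (\<forall>u v. lt (f u) (f v) \<longleftrightarrow> strict_prefix u v)) \<and>
     (\<forall>x\<in>Q. openin X (l x)) \<and>
     (\<forall>x\<in>Q. (\<exists>y\<in>Q. lt x y) \<longrightarrow>
        l x = (\<Union>s\<in>sons Q lt x. l s) \<and> disjoint_family_on l (sons Q lt x)) \<and>
     (\<forall>B. branch Q lt B \<longrightarrow> (\<exists>p. fruit l B = {p})) \<and>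
     (\<forall>x\<in>Q. (\<forall>y\<in>Q. y \<noteq> x \<longrightarrow> lt x y) \<longrightarrow> l x = topspace X)"

definition grows_into ::
  "'a topology \<Rightarrow> 'n set \<Rightarrow> ('n \<Rightarrow> 'n \<Rightarrow> bool) \<Rightarrow> ('n \<Rightarrow> 'a set) \<Rightarrow> bool" where
  "grows_into X Q lt l \<longleftrightarrow>
     (\<forall>p\<in>topspace X. \<forall>U. openin X U \<and> p \<in> U \<longrightarrow>
        (\<exists>z\<in>scope Q l p. shoot Q lt l z \<ggreater> {U}))"

definition pi_tree ::
  "'a topology \<Rightarrow> 'n set \<Rightarrow> ('n \<Rightarrow> 'n \<Rightarrow> bool) \<Rightarrow> ('n \<Rightarrow> 'a set) \<Rightarrow> bool" where
  "pi_tree X Q lt l \<longleftrightarrow> baire_foliage_tree X Q lt l \<and> grows_into X Q lt l"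

text \<open>Since every pi-tree has a countable skeleton, we may take nodes from nat list.\<close>
definition has_pi_tree :: "'a topology \<Rightarrow> bool" where
  "has_pi_tree X \<longleftrightarrow> (\<exists>(Q :: nat list set) lt l. pi_tree X Q lt l)"

end

theory Submission
  imports Defs
begin

lemma sp_son_iff:
  "(strict_prefix u v \<and> \<not>(\<exists>y. strict_prefix u y \<and> strict_prefix y v)) \<longleftrightarrow> (\<exists>n. v = u@[n])"
proof
  assume H: "strict_prefix u v \<and> \<not>(\<exists>y. strict_prefix u y \<and> strict_prefix y v)"
  then obtain t where v: "v = u @ t" "t \<noteq> []" unfolding strict_prefix_def prefix_def by auto
  then obtain a t' where t: "t = a # t'" by (cases t) auto
  show "\<exists>n. v = u@[n]"
  proof (cases "t' = []")
    case True then show ?thesis using v t by auto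
  next
    case False
    have "strict_prefix u (u@[a])" by (simp add: strict_prefix_def prefix_def)
    moreover have "strict_prefix (u@[a]) v" using v t False by (simp add: strict_prefix_def prefix_def)
    ultimately show ?thesis using H by blast
  qed
next
  assume "\<exists>n. v = u@[n]"
  then obtain n where v: "v = u@[n]" by blast
  show "strict_prefix u v \<and> \<not>(\<exists>y. strict_prefix u y \<and> strict_prefix y v)"
  proof
    show "strict_prefix u v" using v by (simp add: strict_prefix_def prefix_def)
    show "\<not>(\<exists>y. strict_prefix u y \<and> strict_prefix y v)"
    proof
      assume "\<exists>y. strict_prefix u y \<and> strict_prefix y v"
      then obtain y where "strict_prefix u y" "strict_prefix y v" by blast
      then have "length u < length y" "length y < length v" using prefix_length_less by blast+
      then show False using v by simp
    qed
  qed
qed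

lemma sons_list: "sons UNIV strict_prefix (u::nat list) = range (\<lambda>n. u@[n])"
proof (rule set_eqI)
  fix v show "v \<in> sons UNIV strict_prefix u \<longleftrightarrow> v \<in> range (\<lambda>n. u@[n])"
    using sp_son_iff[of u v] unfolding sons_def by auto
qed

definition ptake :: "nat \<Rightarrow> (nat \<Rightarrow> nat) \<Rightarrow> nat list" where
  "ptake n a = map a [0..<n]"

lemma ptake_length[simp]: "length (ptake n a) = n" by (simp add: ptake_def)
lemma ptake_Suc: "ptake (Suc n) a = ptake n a @ [a n]" by (simp add: ptake_def)
lemma ptake_0[simp]: "ptake 0 a = []" by (simp add: ptake_def)
lemma ptake_nth: "i < n \<Longrightarrow> ptake n a ! i = a i" by (simp add: ptake_def)
lemma take_ptake: "take m (ptake n a) = ptake (min m n) a"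
  unfolding ptake_def by (cases "m \<le> n") (simp_all add: take_map take_upt min_def)

lemma take_prefix_mono: "m \<le> n \<Longrightarrow> prefix (ptake m a) (ptake n a)"
  by (metis min.absorb1 take_is_prefix take_ptake)

lemma chain_is_takes:
  fixes B :: "nat list set"
  assumes ch: "\<forall>x\<in>B. \<forall>y\<in>B. x \<noteq> y \<longrightarrow> strict_prefix x y \<or> strict_prefix y x"
  defines "\<alpha> \<equiv> \<lambda>i. if (\<exists>v\<in>B. i < length v) then (SOME v. v \<in> B \<and> i < length v) ! i else 0"
  shows "\<forall>v\<in>B. v = ptake (length v) \<alpha>"
proof
  fix v assume vB: "v \<in> B"
  have "v ! i = \<alpha> i" if i: "i < length v" for i
  proof -
    have ex: "\<exists>v\<in>B. i < length v" using vB i by blast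
    define v' where "v' = (SOME v. v \<in> B \<and> i < length v)"
    have v': "v' \<in> B" "i < length v'" using someI_ex[of "\<lambda>v. v \<in> B \<and> i < length v"] ex unfolding v'_def by auto
    have "prefix v v' \<or> prefix v' v" using ch v' vB by (metis prefix_order.order_refl strict_prefix_def)
    then have "v ! i = v' ! i" using i v'(2) by (metis nth_append prefix_def)
    then show ?thesis unfolding \<alpha>_def v'_def using ex by simp
  qed
  then show "v = ptake (length v) \<alpha>" by (simp add: list_eq_iff_nth_eq ptake_nth)
qed

lemma takes_chain:
  "\<forall>x\<in>range (\<lambda>n. ptake n a). \<forall>y\<in>range (\<lambda>n. ptake n a). x \<noteq> y \<longrightarrow> strict_prefix x y \<or> strict_prefix y x"
  by (auto simp: strict_prefix_def) (metis nat_le_linear take_prefix_mono)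

lemma branch_list:
  assumes "branch UNIV strict_prefix (B::nat list set)"
  shows "\<exists>\<alpha>. B = range (\<lambda>n. ptake n \<alpha>)"
proof -
  have ch: "\<forall>x\<in>B. \<forall>y\<in>B. x \<noteq> y \<longrightarrow> strict_prefix x y \<or> strict_prefix y x"
   and mx: "\<forall>B'. B \<subseteq> B' \<and> (\<forall>x\<in>B'. \<forall>y\<in>B'. x \<noteq> y \<longrightarrow> strict_prefix x y \<or> strict_prefix y x) \<longrightarrow> B' = B"
    using assms unfolding branch_def by auto
  obtain \<alpha> where a: "\<forall>v\<in>B. v = ptake (length v) \<alpha>" using chain_is_takes[OF ch] by blast
  have "B \<subseteq> range (\<lambda>n. ptake n \<alpha>)" using a by blast
  then have "range (\<lambda>n. ptake n \<alpha>) = B" using mx takes_chain by blast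
  then show ?thesis by metis
qed

lemma is_tree_list: "is_tree (UNIV :: nat list set) strict_prefix"
proof -
  have 1: "wf {(u, v). u \<in> {v. strict_prefix v x} \<and> v \<in> {v. strict_prefix v x} \<and> strict_prefix u v}" for x :: "nat list"
    by (rule wf_subset[OF wf_measure[of "length"]])
       (auto dest!: prefix_length_less)
  have 2: "\<forall>u\<in>{v. strict_prefix v x}. \<forall>v\<in>{v. strict_prefix v x}. u \<noteq> v \<longrightarrow> strict_prefix u v \<or> strict_prefix v u" for x :: "nat list"
    by (auto simp: strict_prefix_def dest: prefix_same_cases)
  show ?thesis unfolding is_tree_def Let_def using 1 2 by (auto dest: prefix_order.less_trans)
qed


locale otree =
  fixes X :: "'a topology" and L :: "nat list \<Rightarrow> 'a set" and C :: "'a set" and e :: "nat \<Rightarrow> 'a"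
  assumes L_open: "openin X (L u)"
    and L_root: "L [] = topspace X"
    and L_split: "L u = (\<Union>n. L (u@[n]))"
    and L_disj: "n \<noteq> m \<Longrightarrow> L (u@[n]) \<inter> L (u@[m]) = {}"
    and L_fruit: "\<exists>p. (\<Inter>n. L (ptake n \<alpha>)) = {p}"
    and L_grow: "p \<in> topspace X \<Longrightarrow> openin X U \<Longrightarrow> p \<in> U \<Longrightarrow>
        \<exists>u F. p \<in> L u \<and> finite F \<and> (\<forall>n. n \<notin> F \<longrightarrow> L (u@[n]) \<subseteq> U)"
    and C_e: "C \<subseteq> range e"
begin

lemma L_snoc_sub: "L (u@[n]) \<subseteq> L u"
  using L_split[of u] by blast

lemma L_mono: "prefix u v \<Longrightarrow> L v \<subseteq> L u"
proof -
  assume "prefix u v"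
  then obtain w where v: "v = u @ w" by (auto simp: prefix_def)
  have "L (u @ w) \<subseteq> L u"
  proof (induction w rule: rev_induct)
    case (snoc x xs) then show ?case using L_snoc_sub[of "u@xs" x] by auto
  qed simp
  then show ?thesis using v by simp
qed

lemma L_par: "u \<parallel> v \<Longrightarrow> L u \<inter> L v = {}"
proof -
  assume "u \<parallel> v"
  then obtain as b bs c cs where h: "b \<noteq> c" "u = as @ b # bs" "v = as @ c # cs"
    using parallel_decomp by blast
  have "L u \<subseteq> L (as@[b])" using h by (intro L_mono) (simp add: prefix_def)
  moreover have "L v \<subseteq> L (as@[c])" using h by (intro L_mono) (simp add: prefix_def)
  ultimately show ?thesis using L_disj[OF h(1), of as] by blast
qed

lemma L_cmp: "p \<in> L u \<Longrightarrow> p \<in> L v \<Longrightarrow> prefix u v \<or> prefix v u"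
  using L_par[of u v] parallelI[of u v] by blast

lemma L_uniq: "p \<in> L u \<Longrightarrow> p \<in> L v \<Longrightarrow> length u = length v \<Longrightarrow> u = v"
proof -
  assume a: "p \<in> L u" "p \<in> L v" "length u = length v"
  have pe: "prefix x y \<Longrightarrow> length x = length y \<Longrightarrow> x = y" for x y :: "nat list"
    by (auto simp: prefix_def)
  show "u = v" using L_cmp[OF a(1,2)] a(3) pe by metis
qed

lemma L_sub: "L u \<subseteq> topspace X"
  using L_mono[of "[]" u] L_root by (simp add: prefix_def)

lemma node_ex: "p \<in> topspace X \<Longrightarrow> \<exists>v. length v = n \<and> p \<in> L v"
proof (induction n)
  case 0 then show ?case using L_root by auto
next
  case (Suc n)
  then obtain v where "length v = n" "p \<in> L v" by blast
  then obtain m where "p \<in> L (v@[m])" using L_split[of v] by blast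
  then show ?case using \<open>length v = n\<close> by (intro exI[of _ "v@[m]"]) simp
qed

definition node :: "'a \<Rightarrow> nat \<Rightarrow> nat list" where
  "node p n = (THE v. length v = n \<and> p \<in> L v)"

definition pth :: "'a \<Rightarrow> nat \<Rightarrow> nat" where
  "pth p i = node p (Suc i) ! i"

lemma node_props: "p \<in> topspace X \<Longrightarrow> length (node p n) = n \<and> p \<in> L (node p n)"
proof -
  assume p: "p \<in> topspace X"
  obtain v where v: "length v = n" "p \<in> L v" using node_ex[OF p] by blast
  have "\<exists>!v. length v = n \<and> p \<in> L v"
  proof (rule ex1I[of _ v])
    show "length v = n \<and> p \<in> L v" using v by simp
    fix y assume "length y = n \<and> p \<in> L y"
    then show "y = v" using v L_uniq[of p y v] by simp
  qed
  then show ?thesis unfolding node_def by (rule theI')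
qed

lemma node_eq: "p \<in> L v \<Longrightarrow> node p (length v) = v"
proof -
  assume a: "p \<in> L v"
  have "p \<in> topspace X" using a L_sub by blast
  then show ?thesis using node_props[of p "length v"] L_uniq[of p "node p (length v)" v] a by auto
qed

lemma ptake_pth: assumes "p \<in> topspace X" shows "ptake n (pth p) = node p n"
proof (rule nth_equalityI)
  show "length (ptake n (pth p)) = length (node p n)" using node_props[OF assms] by simp
  fix i assume "i < length (ptake n (pth p))"
  then have i: "i < n" by simp
  have cmp: "prefix (node p (Suc i)) (node p n) \<or> prefix (node p n) (node p (Suc i))"
    using L_cmp[of p "node p (Suc i)" "node p n"] node_props[OF assms, of "Suc i"] node_props[OF assms, of n]
    by blast
  have "prefix (node p (Suc i)) (node p n)"
  proof (cases "prefix (node p (Suc i)) (node p n)")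
    case False
    then have "prefix (node p n) (node p (Suc i))" using cmp by blast
    then have "n \<le> Suc i" using prefix_length_le node_props[OF assms] by metis
    then have "n = Suc i" using i by simp
    then show ?thesis by simp
  qed
  then have "node p (Suc i) ! i = node p n ! i"
    using node_props[OF assms, of "Suc i"] by (metis lessI nth_append prefix_def)
  then show "ptake n (pth p) ! i = node p n ! i" using i by (simp add: ptake_nth pth_def)
qed

lemma pth_in: "p \<in> topspace X \<Longrightarrow> p \<in> L (ptake n (pth p))"
  using ptake_pth node_props by simp

lemma pth_fruit: "p \<in> topspace X \<Longrightarrow> (\<Inter>n. L (ptake n (pth p))) = {p}"
proof -
  assume p: "p \<in> topspace X"
  obtain q where q: "(\<Inter>n. L (ptake n (pth p))) = {q}" using L_fruit[of "pth p"] by blast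
  have "p \<in> (\<Inter>n. L (ptake n (pth p)))" using pth_in[OF p] by blast
  then show ?thesis using q by simp
qed

lemma ptake_pth_eq: "p \<in> L u \<Longrightarrow> ptake (length u) (pth p) = u"
proof -
  assume a: "p \<in> L u"
  have "p \<in> topspace X" using a L_sub by blast
  then show ?thesis using ptake_pth node_eq[OF a] by simp
qed

definition bad :: "nat list \<Rightarrow> bool" where
  "bad u \<longleftrightarrow> (\<exists>m. e m \<in> C \<inter> L u)"
definition nb :: "nat list \<Rightarrow> nat" where
  "nb u = (LEAST m. e m \<in> C \<inter> L u)"
definition bp :: "nat list \<Rightarrow> nat \<Rightarrow> nat" where
  "bp u = pth (e (nb u))"
definition tk :: "nat list \<Rightarrow> nat \<Rightarrow> nat list" where
  "tk u k = ptake (length u + k) (bp u)"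
definition skp :: "nat \<Rightarrow> nat \<Rightarrow> nat" where
  "skp a i = (if i < a then i else Suc i)"
definition hang :: "nat list \<Rightarrow> nat \<Rightarrow> nat \<Rightarrow> nat list" where
  "hang u k i = tk u k @ [skp (bp u (length u + k)) i]"

lemma nb_in: "bad u \<Longrightarrow> e (nb u) \<in> C \<inter> L u"
  unfolding bad_def nb_def by (rule LeastI_ex)

lemma tk_0: "bad u \<Longrightarrow> tk u 0 = u"
  unfolding tk_def bp_def using nb_in ptake_pth_eq by simp

lemma tk_Suc: "tk u (Suc k) = tk u k @ [bp u (length u + k)]"
  unfolding tk_def by (simp add: ptake_Suc)

lemma tk_length[simp]: "length (tk u k) = length u + k"
  unfolding tk_def by simp

lemma tk_mono: "k \<le> k' \<Longrightarrow> prefix (tk u k) (tk u k')"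
  unfolding tk_def by (simp add: take_prefix_mono)

lemma c_in_tk: "bad u \<Longrightarrow> e (nb u) \<in> L (tk u k)"
  unfolding tk_def bp_def using nb_in pth_in L_sub by blast

lemma skp_ne: "skp a i \<noteq> a" unfolding skp_def by auto
lemma skp_inj: "inj (skp a)" unfolding skp_def inj_def by auto
lemma skp_onto: "m \<noteq> a \<Longrightarrow> \<exists>i. skp a i = m"
  unfolding skp_def by (cases "m < a") (auto intro: exI[of _ "m - 1"])

lemma hang_sub: "L (hang u k i) \<subseteq> L (tk u k)"
  unfolding hang_def by (rule L_snoc_sub)

lemma hang_length[simp]: "length (hang u k i) = length u + k + 1"
  unfolding hang_def by simp

lemma hang_notc: "bad u \<Longrightarrow> e (nb u) \<notin> L (hang u k i)"
  using c_in_tk[of u "Suc k"] L_disj[OF skp_ne[of "bp u (length u + k)" i], where u="tk u k"]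
  unfolding hang_def tk_Suc by blast

lemma hang_disj1: "k < k' \<Longrightarrow> L (hang u k i) \<inter> L (hang u k' i') = {}"
proof -
  assume "k < k'"
  then have "L (hang u k' i') \<subseteq> L (tk u (Suc k))"
    using hang_sub[of u k' i'] L_mono[OF tk_mono[of "Suc k" k' u]] by auto
  then show ?thesis
    using L_disj[OF skp_ne[of "bp u (length u + k)" i], where u="tk u k"]
    unfolding hang_def tk_Suc by blast
qed

lemma hang_disj: "(k,i) \<noteq> (k',i') \<Longrightarrow> L (hang u k i) \<inter> L (hang u k' i') = {}"
proof -
  assume ne: "(k,i) \<noteq> (k',i')"
  have "k < k' \<or> k' < k \<or> (k = k' \<and> i \<noteq> i')" using ne by auto
  then consider "k < k'" | "k' < k" | "k = k'" "i \<noteq> i'" by blast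
  then show ?thesis
  proof cases
    case 1 then show ?thesis by (rule hang_disj1)
  next
    case 2 then show ?thesis using hang_disj1 by blast
  next
    case 3 then show ?thesis
      unfolding hang_def using L_disj skp_inj by (simp add: inj_eq)
  qed
qed

lemma cover: assumes b: "bad u"
  shows "L u - {e (nb u)} = (\<Union>k. \<Union>i. L (hang u k i))"
proof
  let ?c = "e (nb u)"
  show "(\<Union>k. \<Union>i. L (hang u k i)) \<subseteq> L u - {?c}"
  proof (intro subsetI, elim UN_E)
    fix q k i assume q: "q \<in> L (hang u k i)"
    have "L (tk u k) \<subseteq> L u" using L_mono[OF tk_mono[of 0 k u]] tk_0[OF b] by simp
    then show "q \<in> L u - {?c}" using q hang_sub[of u k i] hang_notc[OF b, of k i] by blast
  qed
  show "L u - {?c} \<subseteq> (\<Union>k. \<Union>i. L (hang u k i))"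
  proof
    fix q assume q: "q \<in> L u - {?c}"
    have ct: "?c \<in> topspace X" using nb_in[OF b] L_sub by blast
    have "q \<notin> (\<Inter>n. L (ptake n (bp u)))" using pth_fruit[OF ct] q unfolding bp_def by auto
    then obtain n where n: "q \<notin> L (ptake n (bp u))" by blast
    have "\<not> n \<le> length u"
    proof
      assume "n \<le> length u"
      then have "prefix (ptake n (bp u)) (tk u 0)" unfolding tk_def by (simp add: take_prefix_mono)
      then show False using L_mono n q tk_0[OF b] by auto
    qed
    then have ex: "\<exists>k. q \<notin> L (tk u k)" using n unfolding tk_def by (intro exI[of _ "n - length u"]) simp
    define k where "k = (LEAST k. q \<notin> L (tk u k))"
    have k1: "q \<notin> L (tk u k)" unfolding k_def by (rule LeastI_ex[OF ex])
    have "k \<noteq> 0" proof assume "k = 0" then show False using k1 q tk_0[OF b] by simp qed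
    then obtain j where kj: "k = Suc j" by (cases k) auto
    have j1: "q \<in> L (tk u j)" using not_less_Least[of j "\<lambda>k. q \<notin> L (tk u k)"] kj k_def by auto
    then obtain m where m: "q \<in> L (tk u j @ [m])" using L_split[of "tk u j"] by blast
    have "m \<noteq> bp u (length u + j)" using m k1 kj tk_Suc by auto
    then obtain i where "skp (bp u (length u + j)) i = m" using skp_onto by blast
    then have "q \<in> L (hang u j i)" using m unfolding hang_def by simp
    then show "q \<in> (\<Union>k. \<Union>i. L (hang u k i))" by blast
  qed
qed

end


datatype st = Old "nat list" | Dn "nat list" nat nat

fun isOld :: "st \<Rightarrow> bool" where
  "isOld (Old u) = True" | "isOld (Dn x K j) = False"

lemma UN_shift: "(\<Union>n. f n) = f 0 \<union> (\<Union>n. f (Suc n))"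
proof (rule set_eqI)
  fix q show "q \<in> (\<Union>n. f n) \<longleftrightarrow> q \<in> f 0 \<union> (\<Union>n. f (Suc n))"
  proof
    assume "q \<in> (\<Union>n. f n)" then obtain n where "q \<in> f n" by blast
    then show "q \<in> f 0 \<union> (\<Union>n. f (Suc n))" by (cases n) auto
  qed auto
qed

context otree begin

fun son :: "st \<Rightarrow> nat \<Rightarrow> st" where
  "son (Old u) n = (if bad u then Dn u n 0 else Old (u@[n]))"
| "son (Dn x K j) n = (if j < K then (if n = 0 then Dn x K (Suc j)
      else Old (hang x j (prod_encode (K-j, n-1)))) else Old (hang x j (prod_encode (0, n))))"

definition DI :: "nat \<Rightarrow> nat \<Rightarrow> (nat \<times> nat) set" where
  "DI K j = {(k, prod_encode (K-k, r)) | k r. j \<le> k \<and> k \<le> K}"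
definition HL :: "nat list \<Rightarrow> (nat \<times> nat) set \<Rightarrow> 'a set" where
  "HL x A = (\<Union>(k,i)\<in>A. L (hang x k i))"

fun Lu :: "st \<Rightarrow> 'a set" where
  "Lu (Old u) = L u" | "Lu (Dn x K j) = HL x (DI K j)"
fun anc :: "st \<Rightarrow> nat list" where
  "anc (Old u) = u" | "anc (Dn x K j) = tk x j"
fun ok :: "st \<Rightarrow> bool" where
  "ok (Old u) = True" | "ok (Dn x K j) = (bad x \<and> j \<le> K)"
definition stn :: "nat list \<Rightarrow> st" where
  "stn w = foldl son (Old []) w"

lemma stn_snoc: "stn (w@[n]) = son (stn w) n" by (simp add: stn_def)
lemma stn_nil: "stn [] = Old []" by (simp add: stn_def)
lemma ok_son: "ok s \<Longrightarrow> ok (son s n)" by (cases s) auto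
lemma ok_stn: "ok (stn w)"
  by (induction w rule: rev_induct) (auto simp: stn_snoc stn_nil ok_son)

lemma HL_disj: "A \<inter> B = {} \<Longrightarrow> HL x A \<inter> HL x B = {}"
proof (rule equals0I)
  fix q assume AB: "A \<inter> B = {}" and "q \<in> HL x A \<inter> HL x B"
  then obtain k i k' i' where h: "(k,i)\<in>A" "(k',i')\<in>B" "q \<in> L (hang x k i)" "q \<in> L (hang x k' i')"
    unfolding HL_def by blast
  then have "(k,i) \<noteq> (k',i')" using AB by blast
  then show False using hang_disj[of k i k' i' x] h by blast
qed

lemma HL_single: "HL x {(j, prod_encode (d, r)) | r. True} = (\<Union>r. L (hang x j (prod_encode (d, r))))"
  unfolding HL_def by blast

lemma HL_Un: "HL x (A \<union> B) = HL x A \<union> HL x B" unfolding HL_def by blast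

lemma DI_split: "j < K \<Longrightarrow> DI K j = DI K (Suc j) \<union> {(j, prod_encode (K-j, r)) | r. True}"
  unfolding DI_def by (auto simp: le_Suc_eq)

lemma DI_last: "DI K K = {(K, prod_encode (0, r)) | r. True}"
  unfolding DI_def by auto

lemma DI_all: "(\<Union>K. DI K 0) = UNIV"
proof (rule set_eqI)
  fix p :: "nat \<times> nat"
  obtain k i where p: "p = (k,i)" by (cases p)
  obtain d r where dr: "prod_decode i = (d, r)" by (cases "prod_decode i")
  have "i = prod_encode (d, r)" using dr by (metis prod_decode_inverse)
  then have "p \<in> DI (k+d) 0" unfolding DI_def p by auto
  then show "p \<in> (\<Union>K. DI K 0) \<longleftrightarrow> p \<in> UNIV" by blast
qed

lemma DI_disj: "n \<noteq> m \<Longrightarrow> DI n 0 \<inter> DI m 0 = {}"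
  unfolding DI_def by (auto simp: prod_encode_eq)

lemma HL_UNIV: "HL x UNIV = (\<Union>k. \<Union>i. L (hang x k i))"
  unfolding HL_def by blast

lemma HL_UN: "HL x (\<Union>K. A K) = (\<Union>K. HL x (A K))"
  unfolding HL_def by blast

lemma Lu_sub_anc: "ok s \<Longrightarrow> Lu s \<subseteq> L (anc s)"
proof (cases s)
  case (Dn x K j)
  have "L (hang x k i) \<subseteq> L (tk x j)" if "j \<le> k" for k i
    using hang_sub[of x k i] L_mono[OF tk_mono[OF that, of x]] by blast
  then show ?thesis using Dn by (auto simp: HL_def DI_def)
qed simp

lemma anc_son: "ok s \<Longrightarrow> prefix (anc s) (anc (son s n)) \<and>
   length (anc (son s n)) = length (anc s) + (if isOld s \<and> \<not> isOld (son s n) then 0 else 1)"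
proof (cases s)
  case (Old u)
  then show ?thesis by (auto simp: tk_0 prefix_def)
next
  case (Dn x K j)
  then show ?thesis
    by (auto simp: hang_def tk_Suc prefix_def)
qed

lemma son_Old_bad: "bad u \<Longrightarrow> e (nb u) \<notin> Lu (son (Old u) n)"
  using hang_notc by (auto simp: HL_def)

lemma split_disj: "ok s \<Longrightarrow> n \<noteq> m \<Longrightarrow> Lu (son s n) \<inter> Lu (son s m) = {}"
proof (cases s)
  case (Old u)
  assume "n \<noteq> m"
  then show ?thesis using Old L_disj DI_disj[of n m] HL_disj by auto
next
  case (Dn x K j)
  assume ok: "ok s" and nm: "n \<noteq> m"
  show ?thesis
  proof (cases "j < K")
    case True
    have A: "HL x (DI K (Suc j)) \<inter> L (hang x j i) = {}" for i
      using HL_disj[of "DI K (Suc j)" "{(j,i)}" x] unfolding DI_def by (auto simp: HL_def)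
    have B: "r \<noteq> r' \<Longrightarrow> L (hang x j (prod_encode (K-j, r))) \<inter> L (hang x j (prod_encode (K-j, r'))) = {}" for r r'
      using hang_disj by (simp add: prod_encode_eq)
    show ?thesis
    proof (cases "n = 0 \<or> m = 0")
      case True
      then show ?thesis using Dn \<open>j<K\<close> A nm by (auto simp del: Lu.simps) (auto simp: Int_commute)
    next
      case False
      then have "n - 1 \<noteq> m - 1" using nm by arith
      then show ?thesis using Dn \<open>j<K\<close> B[of "n-1" "m-1"] False by auto
    qed
  next
    case False
    then show ?thesis using Dn nm hang_disj by (simp add: prod_encode_eq)
  qed
qed

lemma split_union: "ok s \<Longrightarrow> Lu s - C = (\<Union>n. Lu (son s n) - C) \<and> (\<forall>n. Lu (son s n) \<subseteq> Lu s)"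
proof (cases s)
  case (Old u)
  show ?thesis
  proof (cases "bad u")
    case True
    have cC: "e (nb u) \<in> C" using nb_in[OF True] by blast
    have "(\<Union>n. Lu (son s n)) = HL u UNIV" using Old True DI_all HL_UN[of u "\<lambda>K. DI K 0"] by simp
    also have "\<dots> = L u - {e (nb u)}" using cover[OF True] HL_UNIV by simp
    finally have E: "(\<Union>n. Lu (son s n)) = L u - {e (nb u)}" .
    then have "Lu s - C = (\<Union>n. Lu (son s n)) - C" using Old cC by auto
    moreover have "\<forall>n. Lu (son s n) \<subseteq> Lu s" using E Old by auto
    ultimately show ?thesis by blast
  next
    case False
    then show ?thesis using Old L_split[of u] by auto
  qed
next
  case (Dn x K j)
  assume ok: "ok s"
  have E: "Lu s = (\<Union>n. Lu (son s n))"
  proof (cases "j < K")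
    case True
    have "Lu s = HL x (DI K (Suc j)) \<union> (\<Union>r. L (hang x j (prod_encode (K-j, r))))"
      using Dn DI_split[OF True] HL_Un HL_single by simp
    also have "\<dots> = (\<Union>n. Lu (son s n))"
      using Dn True UN_shift[of "\<lambda>n. Lu (son s n)"] by simp
    finally show ?thesis .
  next
    case False
    then have "j = K" using ok Dn by simp
    then show ?thesis using Dn DI_last HL_single by simp
  qed
  then show ?thesis by auto
qed

end


lemma prefix_nth_eq: "prefix xs ys \<Longrightarrow> i < length xs \<Longrightarrow> xs ! i = ys ! i"
  by (auto simp: prefix_def nth_append)

context otree begin

lemma Dn_to_Old:
  assumes sq: "\<And>n. s (Suc n) = son (s n) (a n)"
  shows "s n = Dn x K j \<Longrightarrow> j \<le> K \<Longrightarrow> \<exists>m\<ge>n. isOld (s m)"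
proof (induction "K - j" arbitrary: n j rule: less_induct)
  case less
  show ?case
  proof (cases "j < K \<and> a n = 0")
    case True
    then have "s (Suc n) = Dn x K (Suc j)" using sq[of n] less.prems by simp
    moreover have "K - Suc j < K - j" using True by (auto simp: diff_less_mono2)
    ultimately obtain m where "m \<ge> Suc n" "isOld (s m)" using less.hyps[of "Suc j" "Suc n"] True by auto
    then show ?thesis by (intro exI[of _ m]) simp
  next
    case False
    then have "isOld (s (Suc n))" using sq[of n] less.prems by auto
    then show ?thesis by (intro exI[of _ "Suc n"]) simp
  qed
qed

lemma new_fruit: "\<exists>p. (\<Inter>n. Lu (stn (ptake n \<alpha>)) - C) = {p}"
proof -
  define s where "s n = stn (ptake n \<alpha>)" for n
  have sq: "s (Suc n) = son (s n) (\<alpha> n)" for n unfolding s_def by (simp add: ptake_Suc stn_snoc)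
  have ok: "ok (s n)" for n unfolding s_def by (rule ok_stn)
  have often: "\<exists>m\<ge>n. isOld (s m)" for n
  proof (cases "s n")
    case (Old u) then show ?thesis by auto
  next
    case (Dn x K j) then show ?thesis using Dn_to_Old[of s \<alpha>, OF sq] ok[of n] by auto
  qed
  have mono: "n \<le> m \<Longrightarrow> Lu (s m) \<subseteq> Lu (s n)" for n m
  proof (induction m rule: dec_induct)
    case (step m) then show ?case using split_union[OF ok[of m]] sq[of m] by auto
  qed simp
  have pchain: "n \<le> m \<Longrightarrow> prefix (anc (s n)) (anc (s m))" for n m
  proof (induction m rule: dec_induct)
    case (step m)
    have "prefix (anc (s m)) (anc (s (Suc m)))" using anc_son[OF ok[of m], of "\<alpha> m"] sq[of m] by simp
    then show ?case using step.IH prefix_order.trans by blast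
  qed simp
  have len2: "length (anc (s (Suc (Suc n)))) > length (anc (s n))" for n
    using anc_son[OF ok[of n], of "\<alpha> n"] anc_son[OF ok[of "Suc n"], of "\<alpha> (Suc n)"] sq[of n] sq[of "Suc n"]
    by (auto split: if_splits)
  have lenb: "length (anc (s (2*n))) \<ge> n" for n
  proof (induction n)
    case (Suc n)
    have "2 * Suc n = Suc (Suc (2*n))" by simp
    then show ?case using len2[of "2*n"] Suc by simp
  qed simp
  define \<beta> where "\<beta> i = anc (s (2 * Suc i)) ! i" for i
  have ancb: "anc (s m) = ptake (length (anc (s m))) \<beta>" for m
  proof (rule nth_equalityI)
    fix i assume "i < length (anc (s m))"
    define M where "M = max m (2 * Suc i)"
    have p1: "prefix (anc (s m)) (anc (s M))" using pchain M_def by simp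
    have p2: "prefix (anc (s (2 * Suc i))) (anc (s M))" using pchain M_def by simp
    have l2: "i < length (anc (s (2 * Suc i)))" using lenb[of "Suc i"] by simp
    have "anc (s m) ! i = anc (s M) ! i" using p1 \<open>i < length (anc (s m))\<close>
      by (rule prefix_nth_eq)
    moreover have "anc (s (2 * Suc i)) ! i = anc (s M) ! i" using p2 l2
      by (rule prefix_nth_eq)
    ultimately show "anc (s m) ! i = ptake (length (anc (s m))) \<beta> ! i"
      using \<open>i < length (anc (s m))\<close> by (simp add: ptake_nth \<beta>_def)
  qed simp
  obtain p where p: "(\<Inter>n. L (ptake n \<beta>)) = {p}" using L_fruit[of \<beta>] by blast
  have pin: "p \<in> L (anc (s m))" for m
  proof -
    have h: "p \<in> L (ptake (length (anc (s m))) \<beta>)" using p by blast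
    show ?thesis by (subst ancb) (rule h)
  qed
  have pLu: "p \<in> Lu (s n)" for n
  proof -
    obtain m where m: "m \<ge> n" "isOld (s m)" using often by blast
    then obtain u where "s m = Old u" by (cases "s m") auto
    then have "p \<in> Lu (s m)" using pin[of m] by simp
    then show ?thesis using mono[OF m(1)] by blast
  qed
  have sub: "(\<Inter>n. Lu (s n)) \<subseteq> {p}"
  proof
    fix q assume q: "q \<in> (\<Inter>n. Lu (s n))"
    have "q \<in> L (ptake i \<beta>)" for i
    proof -
      have "q \<in> L (anc (s (2*i)))" using q Lu_sub_anc[OF ok[of "2*i"]] by blast
      moreover have "prefix (ptake i \<beta>) (anc (s (2*i)))"
      proof -
        have "prefix (ptake i \<beta>) (ptake (length (anc (s (2*i)))) \<beta>)" by (rule take_prefix_mono) (rule lenb)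
        then show ?thesis by (subst ancb)
      qed
      ultimately show ?thesis using L_mono by blast
    qed
    then show "q \<in> {p}" using p by blast
  qed
  have remove: "\<exists>m. \<forall>k'<k. e k' \<notin> C \<inter> Lu (s m)" for k
  proof (induction k)
    case 0 then show ?case by simp
  next
    case (Suc k)
    then obtain m where m: "\<forall>k'<k. e k' \<notin> C \<inter> Lu (s m)" by blast
    obtain m' where m': "m' \<ge> m" "isOld (s m')" using often by blast
    then obtain u where u: "s m' = Old u" by (cases "s m'") auto
    have m'': "\<forall>k'<k. e k' \<notin> C \<inter> L u" using m mono[OF m'(1)] u by auto
    show ?case
    proof (cases "e k \<in> C \<inter> L u")
      case False
      then show ?thesis using m'' u by (intro exI[of _ m']) (auto simp: less_Suc_eq)
    next
      case True
      then have b: "bad u" unfolding bad_def by blast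
      have "nb u \<le> k" unfolding nb_def using True by (rule Least_le)
      moreover have "\<not> nb u < k" using m'' nb_in[OF b] by blast
      ultimately have nbk: "nb u = k" by simp
      have "e k \<notin> Lu (s (Suc m'))" using son_Old_bad[OF b] sq[of m'] u nbk by simp
      moreover have "Lu (s (Suc m')) \<subseteq> L u" using mono[of m' "Suc m'"] u by simp
      ultimately show ?thesis using m'' by (intro exI[of _ "Suc m'"]) (auto simp: less_Suc_eq)
    qed
  qed
  have pC: "p \<notin> C"
  proof
    assume "p \<in> C"
    then obtain N where N: "p = e N" using C_e by blast
    obtain m where "\<forall>k'<Suc N. e k' \<notin> C \<inter> Lu (s m)" using remove by blast
    then show False using N pLu[of m] \<open>p \<in> C\<close> by auto
  qed
  have "(\<Inter>n. Lu (s n) - C) = {p}" using sub pLu pC by blast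
  then show ?thesis unfolding s_def by blast
qed

end


context otree begin

lemma Lu_open: "openin X (Lu s)"
proof (cases s)
  case (Old u) then show ?thesis using L_open by simp
next
  case (Dn x K j)
  have "HL x (DI K j) = \<Union>((\<lambda>(k,i). L (hang x k i)) ` DI K j)" unfolding HL_def by blast
  then show ?thesis using Dn L_open by (auto intro!: openin_Union)
qed

lemma Lu_top: "ok s \<Longrightarrow> Lu s \<subseteq> topspace X"
  using Lu_sub_anc L_sub by blast

lemma goodDn:
  assumes okd: "ok (Dn x K j)" and tu: "tk x j = u" and F: "finite F"
    and hU: "\<forall>n. n \<notin> F \<longrightarrow> L (u@[n]) \<subseteq> U"
  shows "\<exists>G. finite G \<and> (\<forall>n. n \<notin> G \<longrightarrow> Lu (son (Dn x K j) n) \<subseteq> U)"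
proof -
  define a where "a = bp x (length x + j)"
  define g where "g r = skp a (prod_encode (K - j, r))" for r
  have ig: "inj g" unfolding g_def inj_def using skp_inj by (auto simp: inj_eq prod_encode_eq)
  define Gr where "Gr = g -` F"
  have fGr: "finite Gr" unfolding Gr_def using F ig by (simp add: finite_vimageI)
  define G where "G = {0} \<union> Gr \<union> Suc ` Gr"
  have "finite G" unfolding G_def using fGr by simp
  moreover have "Lu (son (Dn x K j) n) \<subseteq> U" if n: "n \<notin> G" for n
  proof (cases "j < K")
    case True
    have n0: "n \<noteq> 0" using n unfolding G_def by auto
    then have "n = Suc (n - 1)" by simp
    then have "n - 1 \<notin> Gr"
    proof -
      assume e: "n = Suc (n - 1)"
      show "n - 1 \<notin> Gr"
      proof
        assume "n - 1 \<in> Gr"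
        then have "Suc (n - 1) \<in> G" unfolding G_def by blast
        then show False using n e by simp
      qed
    qed
    then have "g (n-1) \<notin> F" unfolding Gr_def by simp
    moreover have "son (Dn x K j) n = Old (u @ [g (n-1)])"
      using True n0 tu by (simp add: g_def a_def hang_def)
    ultimately show ?thesis using hU by simp
  next
    case False
    then have jK: "j = K" using okd by simp
    have "n \<notin> Gr" using n unfolding G_def by auto
    then have "g n \<notin> F" unfolding Gr_def by simp
    moreover have "son (Dn x K j) n = Old (u @ [g n])"
      using jK tu by (simp add: g_def a_def hang_def)
    ultimately show ?thesis using hU by simp
  qed
  ultimately show ?thesis by blast
qed

definition mu :: "nat list \<Rightarrow> st \<Rightarrow> nat" where
  "mu u s = 2 * (length u - length (anc s)) + (if isOld s then 1 else 0)"

lemma descend: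
  assumes pu: "p \<in> L u" and F: "finite F" and hU: "\<forall>n. n \<notin> F \<longrightarrow> L (u@[n]) \<subseteq> U"
  shows "p \<in> Lu (stn w) - C \<Longrightarrow> prefix (anc (stn w)) u \<Longrightarrow>
    \<exists>w'. p \<in> Lu (stn w') - C \<and> (\<exists>G. finite G \<and> (\<forall>n. n \<notin> G \<longrightarrow> Lu (son (stn w') n) \<subseteq> U))"
proof (induction "mu u (stn w)" arbitrary: w rule: less_induct)
  case less
  define s where "s = stn w"
  have oks: "ok s" unfolding s_def by (rule ok_stn)
  have sw: "stn w = s" using s_def by simp
  have ps: "p \<in> Lu s - C" using less.prems s_def by simp
  show ?case
  proof (cases "anc s = u")
    case True
    show ?thesis
    proof (cases s)
      case (Old v)
      then have v: "v = u" using True by simp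
      show ?thesis
      proof (cases "bad u")
        case False
        have "\<forall>n. n \<notin> F \<longrightarrow> Lu (son s n) \<subseteq> U" using Old v False hU by simp
        then show ?thesis using ps F by (intro exI[of _ w]) (unfold sw, blast)
      next
        case b: True
        have "p \<in> (\<Union>n. Lu (son s n) - C)" using conjunct1[OF split_union[OF oks]] ps by simp
        then obtain K where K: "p \<in> Lu (son s K) - C" by blast
        have sK: "son s K = Dn u K 0" using Old v b by simp
        have okd: "ok (Dn u K 0)" using b by simp
        obtain G where G: "finite G" "\<forall>n. n \<notin> G \<longrightarrow> Lu (son (Dn u K 0) n) \<subseteq> U"
          using goodDn[OF okd tk_0[OF b] F hU] by blast
        have st: "stn (w@[K]) = Dn u K 0" using sK s_def stn_snoc by simp
        show ?thesis
        proof (intro exI[of _ "w@[K]"] conjI)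
          show "p \<in> Lu (stn (w@[K])) - C" using K by (simp only: st sK)
          show "\<exists>G. finite G \<and> (\<forall>n. n \<notin> G \<longrightarrow> Lu (son (stn (w@[K])) n) \<subseteq> U)"
            unfolding st using G by blast
        qed
      qed
    next
      case (Dn x K j)
      then have tu: "tk x j = u" using True by simp
      have okd: "ok (Dn x K j)" using oks Dn by simp
      obtain G where "finite G" "\<forall>n. n \<notin> G \<longrightarrow> Lu (son (Dn x K j) n) \<subseteq> U"
        using goodDn[OF okd tu F hU] by blast
      then show ?thesis using ps Dn by (intro exI[of _ w]) (unfold sw, blast)
    qed
  next
    case False
    have pre: "prefix (anc s) u" using less.prems s_def by simp
    then have "strict_prefix (anc s) u" using False by (simp add: strict_prefix_def)
    then have lt: "length (anc s) < length u" by (rule prefix_length_less)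
    have "p \<in> (\<Union>n. Lu (son s n) - C)" using conjunct1[OF split_union[OF oks]] ps by simp
    then obtain n where n: "p \<in> Lu (son s n) - C" by blast
    define s' where "s' = son s n"
    have s'w: "s' = stn (w@[n])" using s'_def s_def stn_snoc by simp
    have as: "prefix (anc s) (anc s')"
      "length (anc s') = length (anc s) + (if isOld s \<and> \<not> isOld s' then 0 else 1)"
      using anc_son[OF oks, of n] s'_def by auto
    have "p \<in> L (anc s')" using n Lu_sub_anc[OF ok_son[OF oks]] s'_def by blast
    then have cmp: "prefix (anc s') u \<or> prefix u (anc s')" using L_cmp[OF _ pu] by blast
    have pre': "prefix (anc s') u"
    proof (cases "prefix (anc s') u")
      case False
      then have "prefix u (anc s')" using cmp by blast
      moreover have "length (anc s') \<le> length u" using as(2) lt by (auto split: if_splits)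
      ultimately have "anc s' = u" by (auto simp: prefix_def)
      then show ?thesis by simp
    qed
    have "mu u s' < mu u s" unfolding mu_def using as(2) lt by (auto split: if_splits)
    then have m: "mu u (stn (w@[n])) < mu u (stn w)" using s'w s_def by simp
    have p': "p \<in> Lu (stn (w@[n])) - C" using n s'_def s'w by simp
    have q': "prefix (anc (stn (w@[n]))) u" using pre' s'w by simp
    show ?thesis by (rule less.hyps[OF m p' q'])
  qed
qed

lemma new_nonempty: "Lu (stn w) - C \<noteq> {}"
proof -
  define \<alpha> where "\<alpha> i = (if i < length w then w ! i else 0)" for i
  have w: "ptake (length w) \<alpha> = w" by (rule nth_equalityI) (auto simp: ptake_nth \<alpha>_def)
  obtain p where eq: "(\<Inter>n. Lu (stn (ptake n \<alpha>)) - C) = {p}" using new_fruit[of \<alpha>] by blast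
  have "p \<in> (\<Inter>n. Lu (stn (ptake n \<alpha>)) - C)" using eq by simp
  then have "p \<in> Lu (stn (ptake (length w) \<alpha>)) - C" by blast
  then have "p \<in> Lu (stn w) - C" by (simp only: w)
  then show ?thesis by blast
qed

end


context otree begin

lemma new_pi: "pi_tree (subtopology X (topspace X - C)) UNIV strict_prefix (\<lambda>w. Lu (stn w) - C)"
proof -
  define Y where "Y = subtopology X (topspace X - C)"
  define l' where "l' w = Lu (stn w) - C" for w
  have topY: "topspace Y = topspace X - C" unfolding Y_def by auto
  have l'Y: "l' w = Lu (stn w) \<inter> (topspace X - C)" for w
    using Lu_top[OF ok_stn[of w]] unfolding l'_def by blast
  have opn: "openin Y (l' w)" for w
    unfolding Y_def openin_subtopology l'Y using Lu_open by blast
  have sons: "sons UNIV strict_prefix w = range (\<lambda>n. w@[n])" for w :: "nat list" by (rule sons_list)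
  have l'son: "l' (w@[n]) = Lu (son (stn w) n) - C" for w n unfolding l'_def by (simp add: stn_snoc)
  have loc: "l' w = (\<Union>s\<in>sons UNIV strict_prefix w. l' s) \<and> disjoint_family_on l' (sons UNIV strict_prefix w)" for w
  proof
    show "l' w = (\<Union>s\<in>sons UNIV strict_prefix w. l' s)"
      unfolding sons l'son using conjunct1[OF split_union[OF ok_stn[of w]]] by (simp add: l'_def stn_snoc)
    show "disjoint_family_on l' (sons UNIV strict_prefix w)"
      unfolding sons disjoint_family_on_def
    proof (intro ballI impI)
      fix a b assume "a \<in> range (\<lambda>n. w@[n])" "b \<in> range (\<lambda>n. w@[n])" "a \<noteq> b"
      then obtain n m where nm: "a = w@[n]" "b = w@[m]" "n \<noteq> m" by auto
      show "l' a \<inter> l' b = {}" unfolding nm l'son using split_disj[OF ok_stn[of w] nm(3)] by blast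
    qed
  qed
  have br: "\<exists>p. fruit l' B = {p}" if bB: "branch UNIV strict_prefix B" for B
  proof -
    obtain \<alpha> where B: "B = range (\<lambda>n. ptake n \<alpha>)" using branch_list[OF bB] by blast
    obtain p where "(\<Inter>n. Lu (stn (ptake n \<alpha>)) - C) = {p}" using new_fruit[of \<alpha>] by blast
    then have "fruit l' B = {p}" unfolding fruit_def B l'_def by simp
    then show ?thesis by blast
  qed
  have root: "l' x = topspace Y" if "\<forall>y\<in>UNIV. y \<noteq> x \<longrightarrow> strict_prefix x y" for x
  proof -
    have "x = []"
    proof (rule ccontr)
      assume "x \<noteq> []"
      then have "strict_prefix x []" using that by auto
      then show False by simp
    qed
    then show ?thesis unfolding topY l'_def by (simp add: stn_nil L_root)
  qed
  have bft: "baire_foliage_tree Y UNIV strict_prefix l'"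
    unfolding baire_foliage_tree_def
  proof (intro conjI)
    show "is_tree (UNIV :: nat list set) strict_prefix" by (rule is_tree_list)
    show "\<exists>f :: nat list \<Rightarrow> nat list. bij_betw f UNIV UNIV \<and> (\<forall>u v. strict_prefix (f u) (f v) \<longleftrightarrow> strict_prefix u v)"
      by (intro exI[of _ id]) simp
  qed (use opn in blast, use loc in blast, use br in blast, use root in blast)
  have gr: "grows_into Y UNIV strict_prefix l'"
    unfolding grows_into_def
  proof (intro ballI allI impI)
    fix p W assume p: "p \<in> topspace Y" and W: "openin Y W \<and> p \<in> W"
    obtain U where U: "openin X U" "W = U \<inter> (topspace X - C)"
      using W unfolding Y_def openin_subtopology by blast
    have pX: "p \<in> topspace X" "p \<notin> C" "p \<in> U" using p W U topY by auto
    obtain u F where uF: "p \<in> L u" "finite F" "\<forall>n. n \<notin> F \<longrightarrow> L (u@[n]) \<subseteq> U"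
      using L_grow[OF pX(1) U(1) pX(3)] by blast
    have "p \<in> Lu (stn []) - C" using pX by (simp add: stn_nil L_root)
    moreover have "prefix (anc (stn [])) u" by (simp add: stn_nil)
    ultimately obtain w G where wG: "p \<in> Lu (stn w) - C" "finite G"
        "\<forall>n. n \<notin> G \<longrightarrow> Lu (son (stn w) n) \<subseteq> U"
      using descend[OF uF] by blast
    have zs: "w \<in> scope UNIV l' p" unfolding scope_def l'_def using wG by simp
    have "shoot UNIV strict_prefix l' w \<ggreater> {W}"
      unfolding refines_def
    proof (intro ballI impI)
      fix D assume "D \<in> {W}" "D \<noteq> {}"
      then have D: "D = W" by simp
      define C' where "C' = (\<lambda>n. w@[n]) ` (- G)"
      define Gs where "Gs = (\<Union>s\<in>C'. l' s)"
      have "C' \<subseteq> sons UNIV strict_prefix w" unfolding C'_def sons by auto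
      moreover have "finite (sons UNIV strict_prefix w - C')"
      proof -
        have "sons UNIV strict_prefix w - C' \<subseteq> (\<lambda>n. w@[n]) ` G" unfolding sons C'_def by auto
        then show ?thesis using wG(2) finite_subset by blast
      qed
      ultimately have GsS: "Gs \<in> shoot UNIV strict_prefix l' w" unfolding shoot_def Gs_def by blast
      obtain n where n: "n \<notin> G" using ex_new_if_finite[OF infinite_UNIV_nat wG(2)] by blast
      have "l' (w@[n]) \<noteq> {}" unfolding l'_def by (rule new_nonempty)
      moreover have "l' (w@[n]) \<subseteq> Gs" unfolding Gs_def C'_def using n by blast
      ultimately have ne: "Gs \<noteq> {}" by blast
      have "Gs \<subseteq> W"
      proof
        fix q assume "q \<in> Gs"
        then obtain m where m: "m \<notin> G" "q \<in> l' (w@[m])" unfolding Gs_def C'_def by blast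
        then have "q \<in> Lu (son (stn w) m) - C" using l'son by simp
        moreover have "Lu (son (stn w) m) \<subseteq> topspace X" using Lu_top[OF ok_son[OF ok_stn]] by blast
        ultimately show "q \<in> W" using wG(3) m(1) U(2) by blast
      qed
      then show "\<exists>G\<in>shoot UNIV strict_prefix l' w. G \<noteq> {} \<and> G \<subseteq> D" using GsS ne D by blast
    qed
    then show "\<exists>z\<in>scope UNIV l' p. shoot UNIV strict_prefix l' z \<ggreater> {W}" using zs by blast
  qed
  show ?thesis using bft gr unfolding pi_tree_def Y_def l'_def by simp
qed

end


lemma sons_transfer:
  assumes Q: "Q = range f" and iso: "\<forall>u v. lt (f u) (f v) \<longleftrightarrow> strict_prefix u v"
  shows "sons Q lt (f u) = range (\<lambda>n. f (u@[n]))"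
proof (rule set_eqI)
  fix s
  show "s \<in> sons Q lt (f u) \<longleftrightarrow> s \<in> range (\<lambda>n. f (u@[n]))"
  proof
    assume s: "s \<in> sons Q lt (f u)"
    then obtain v where v: "s = f v" using Q unfolding sons_def by blast
    have "strict_prefix u v" using s v iso unfolding sons_def by simp
    moreover have "\<not>(\<exists>y. strict_prefix u y \<and> strict_prefix y v)"
    proof
      assume "\<exists>y. strict_prefix u y \<and> strict_prefix y v"
      then obtain y where "strict_prefix u y" "strict_prefix y v" by blast
      then have "f y \<in> Q" "lt (f u) (f y)" "lt (f y) s" using Q iso v by auto
      then show False using s unfolding sons_def by blast
    qed
    ultimately obtain n where "v = u@[n]" using sp_son_iff by blast
    then show "s \<in> range (\<lambda>n. f (u@[n]))" using v by blast
  next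
    assume "s \<in> range (\<lambda>n. f (u@[n]))"
    then obtain n where s: "s = f (u@[n])" by blast
    have sp: "strict_prefix u (u@[n]) \<and> \<not>(\<exists>y. strict_prefix u y \<and> strict_prefix y (u@[n]))"
      using sp_son_iff by blast
    have "\<not> (\<exists>v\<in>Q. lt (f u) v \<and> lt v s)"
    proof
      assume "\<exists>v\<in>Q. lt (f u) v \<and> lt v s"
      then obtain y where "lt (f u) (f y)" "lt (f y) (f (u@[n]))" using Q s by blast
      then show False using sp iso by blast
    qed
    then show "s \<in> sons Q lt (f u)" unfolding sons_def using s sp iso Q by auto
  qed
qed

lemma fruit_transfer:
  assumes Q: "Q = range f" and inj: "inj f" and iso: "\<forall>u v. lt (f u) (f v) \<longleftrightarrow> strict_prefix u v"
    and br: "\<forall>B. branch Q lt B \<longrightarrow> (\<exists>p. fruit l B = {p})"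
  shows "\<exists>p. (\<Inter>n. l (f (ptake n \<alpha>))) = {p}"
proof -
  define B where "B = f ` range (\<lambda>n. ptake n \<alpha>)"
  have ch: "\<forall>x\<in>B. \<forall>y\<in>B. x \<noteq> y \<longrightarrow> lt x y \<or> lt y x"
  proof (intro ballI impI)
    fix a b assume ab: "a \<in> B" "b \<in> B" "a \<noteq> b"
    obtain x where x: "a = f (ptake x \<alpha>)" using ab(1) unfolding B_def by blast
    obtain y where y: "b = f (ptake y \<alpha>)" using ab(2) unfolding B_def by blast
    have ne: "ptake x \<alpha> \<noteq> ptake y \<alpha>"
    proof
      assume "ptake x \<alpha> = ptake y \<alpha>"
      then have "a = b" using x y by simp
      then show False using ab(3) by simp
    qed
    have r: "ptake x \<alpha> \<in> range (\<lambda>n. ptake n \<alpha>)" "ptake y \<alpha> \<in> range (\<lambda>n. ptake n \<alpha>)" by (rule rangeI)+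
    have "strict_prefix (ptake x \<alpha>) (ptake y \<alpha>) \<or> strict_prefix (ptake y \<alpha>) (ptake x \<alpha>)"
      using takes_chain[of \<alpha>, rule_format, OF r ne] .
    then show "lt a b \<or> lt b a" unfolding x y using iso by simp
  qed
  have mx: "B' = B" if H: "B \<subseteq> B'" "B' \<subseteq> Q" "\<forall>x\<in>B'. \<forall>y\<in>B'. x \<noteq> y \<longrightarrow> lt x y \<or> lt y x" for B'
  proof -
    have "B' \<subseteq> B"
    proof
      fix y assume y: "y \<in> B'"
      then obtain v where v: "y = f v" using H(2) Q by blast
      define t where "t = ptake (length v) \<alpha>"
      have tB: "f t \<in> B'" using H(1) unfolding B_def t_def by blast
      have "v = t"
      proof (rule ccontr)
        assume "v \<noteq> t"
        then have ne: "f v \<noteq> f t" using inj by (simp add: inj_eq)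
        have "lt (f v) (f t) \<or> lt (f t) (f v)" using H(3) y tB ne unfolding v by blast
        then have "strict_prefix v t \<or> strict_prefix t v" using iso by simp
        then have "length v < length t \<or> length t < length v" using prefix_length_less by blast
        then show False unfolding t_def by simp
      qed
      then have "y = f t" using v by simp
      then show "y \<in> B" unfolding B_def t_def by blast
    qed
    then show "B' = B" using H(1) by blast
  qed
  have "branch Q lt B"
    unfolding branch_def
  proof (intro conjI allI impI)
    show "B \<subseteq> Q" unfolding B_def Q by (rule image_mono) simp
    show "\<forall>x\<in>B. \<forall>y\<in>B. x \<noteq> y \<longrightarrow> lt x y \<or> lt y x" by (rule ch)
    fix B' assume H: "B \<subseteq> B' \<and> B' \<subseteq> Q \<and> (\<forall>x\<in>B'. \<forall>y\<in>B'. x \<noteq> y \<longrightarrow> lt x y \<or> lt y x)"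
    show "B' = B" using mx[OF conjunct1[OF H] conjunct1[OF conjunct2[OF H]] conjunct2[OF conjunct2[OF H]]] .
  qed
  then obtain p where "fruit l B = {p}" using br by blast
  moreover have "fruit l B = (\<Inter>n. l (f (ptake n \<alpha>)))" unfolding fruit_def B_def by (simp only: image_image)
  ultimately have "(\<Inter>n. l (f (ptake n \<alpha>))) = {p}" by simp
  then show ?thesis by blast
qed

theorem mainTheorem2:
  fixes X :: "'a topology" and C :: "'a set"
  assumes "has_pi_tree X"
    and "C \<subseteq> topspace X"
    and "countable C"
  shows "has_pi_tree (subtopology X (topspace X - C))"
proof -
  obtain Q :: "nat list set" and lt l where pt: "pi_tree X Q lt l"
    using assms(1) unfolding has_pi_tree_def by blast
  have bft: "baire_foliage_tree X Q lt l" and gr: "grows_into X Q lt l"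
    using pt unfolding pi_tree_def by auto
  note BF = bft[unfolded baire_foliage_tree_def]
  have exf: "\<exists>f :: nat list \<Rightarrow> nat list. bij_betw f UNIV Q \<and> (\<forall>u v. lt (f u) (f v) \<longleftrightarrow> strict_prefix u v)"
    using BF by (elim conjE)
  obtain f :: "nat list \<Rightarrow> nat list" where bij: "bij_betw f UNIV Q"
      and iso: "\<forall>u v. lt (f u) (f v) \<longleftrightarrow> strict_prefix u v"
    using exf by blast
  have bft_open: "\<forall>x\<in>Q. openin X (l x)" using BF by (elim conjE)
  have bft_loc: "\<forall>x\<in>Q. (\<exists>y\<in>Q. lt x y) \<longrightarrow> l x = (\<Union>s\<in>sons Q lt x. l s) \<and> disjoint_family_on l (sons Q lt x)"
    using BF by (elim conjE)
  have bft_br: "\<forall>B. branch Q lt B \<longrightarrow> (\<exists>p. fruit l B = {p})" using BF by (elim conjE)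
  have bft_root: "\<forall>x\<in>Q. (\<forall>y\<in>Q. y \<noteq> x \<longrightarrow> lt x y) \<longrightarrow> l x = topspace X" using BF by (elim conjE)
  have Q: "Q = range f" using bij by (simp add: bij_betw_def)
  have inj: "inj f" using bij by (simp add: bij_betw_def)
  have fQ: "f u \<in> Q" for u using Q by blast
  define L where "L u = l (f u)" for u
  obtain e :: "nat \<Rightarrow> 'a" where Ce: "C \<subseteq> range e"
  proof (cases "C = {}")
    case True then show ?thesis using that by blast
  next
    case False then show ?thesis using that range_from_nat_into[OF False assms(3)] by blast
  qed
  have sons: "sons Q lt (f u) = range (\<lambda>n. f (u@[n]))" for u
    by (rule sons_transfer[OF Q iso])
  have loc: "l (f u) = (\<Union>s\<in>sons Q lt (f u). l s) \<and> disjoint_family_on l (sons Q lt (f u))" for u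
  proof -
    have "f (u@[0]) \<in> Q" "lt (f u) (f (u@[0]))" using fQ iso by (auto simp: strict_prefix_def prefix_def)
    then show ?thesis using bft_loc[rule_format, OF fQ[of u]] by blast
  qed
  have "otree X L C e"
  proof
    show "openin X (L u)" for u using bft_open fQ unfolding L_def by blast
    show "L [] = topspace X"
    proof -
      have "\<forall>y\<in>Q. y \<noteq> f [] \<longrightarrow> lt (f []) y"
      proof (intro ballI impI)
        fix y assume "y \<in> Q" "y \<noteq> f []"
        then obtain v where v: "y = f v" "v \<noteq> []" using Q by blast
        then show "lt (f []) y" using iso by (simp add: strict_prefix_def prefix_def)
      qed
      then show ?thesis using bft_root fQ[of "[]"] unfolding L_def by blast
    qed
    show "L u = (\<Union>n. L (u@[n]))" for u
      using conjunct1[OF loc[of u]] unfolding sons L_def by simp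
    show "L (u@[n]) \<inter> L (u@[m]) = {}" if "n \<noteq> m" for n m u
    proof -
      have "f (u@[n]) \<noteq> f (u@[m])" using that inj by (simp add: inj_eq)
      then show ?thesis using conjunct2[OF loc[of u]] unfolding sons L_def disjoint_family_on_def by blast
    qed
    show "\<exists>p. (\<Inter>n. L (ptake n \<alpha>)) = {p}" for \<alpha>
      unfolding L_def by (rule fruit_transfer[OF Q inj iso bft_br])
    show "\<exists>u F. p \<in> L u \<and> finite F \<and> (\<forall>n. n \<notin> F \<longrightarrow> L (u@[n]) \<subseteq> U)"
      if p: "p \<in> topspace X" and U: "openin X U" and pU: "p \<in> U" for p U
    proof -
      obtain z where z: "z \<in> scope Q l p" "shoot Q lt l z \<ggreater> {U}"
        using gr p U pU unfolding grows_into_def by blast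
      obtain u where u: "z = f u" using z(1) Q unfolding scope_def by blast
      have pu: "p \<in> L u" using z(1) u unfolding scope_def L_def by simp
      have "U \<noteq> {}" using pU by blast
      then obtain G where G: "G \<in> shoot Q lt l z" "G \<noteq> {}" "G \<subseteq> U"
        using z(2) unfolding refines_def by blast
      then obtain C' where C': "G = (\<Union>s\<in>C'. l s)" "C' \<subseteq> sons Q lt z" "finite (sons Q lt z - C')"
        unfolding shoot_def by blast
      define F where "F = (\<lambda>n. f (u@[n])) -` (sons Q lt z - C')"
      have injn: "inj (\<lambda>n. f (u@[n]))" using inj by (auto simp: inj_def)
      have "finite F" unfolding F_def using C'(3) injn by (simp add: finite_vimageI)
      moreover have "L (u@[n]) \<subseteq> U" if "n \<notin> F" for n
      proof -
        have "f (u@[n]) \<in> sons Q lt z" using sons u by simp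
        then have "f (u@[n]) \<in> C'" using that unfolding F_def by simp
        then show ?thesis using C'(1) G(3) unfolding L_def by blast
      qed
      ultimately show ?thesis using pu by blast
    qed
    show "C \<subseteq> range e" by (rule Ce)
  qed
  then show ?thesis using otree.new_pi unfolding has_pi_tree_def by blast
qed


end
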